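(* Let $(X,\|\cdot\|)$ be a normed linear space, let $I$ be a non-trivial admissible ideal in $\mathbb{N}$, let $x=\{x_k\}_{k\in\mathbb{N}}$ be a sequence in $X$ and let $r>0$. Then the set $I\text{-}st\text{-}\mathrm{LIM}_x^r$ is convex.
   Context: An ideal $I$ in $\mathbb{N}$ is a family of subsets of $\mathbb{N}$ containing $\emptyset$, closed under finite unions and under taking subsets; it is non-trivial if $\mathbb{N}\notin I$ and admissible if $\{n\}\in I$ for every $n$. For $r\ge0$, $x$ is $r$-$I$-statistically convergent to $\xi\in X$ if for every $\varepsilon>0$ and $\delta>0$, $\{n\in\mathbb{N}:\frac1n|\{k\le n:\|x_k-\xi\|\ge r+\varepsilon\}|\ge\delta\}\in I$; $I\text{-}st\text{-}\mathrm{LIM}_x^r$ is the set of all such $\xi$. *)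

theory Defs
  imports "HOL-Analysis.Analysis"
begin

text \<open>An ideal in the natural numbers (here the type nat; the index 0 is immaterial
since admissible ideals contain all singletons).\<close>
definition nat_ideal :: "nat set set \<Rightarrow> bool" where
  "nat_ideal I \<longleftrightarrow> {} \<in> I \<and> (\<forall>A\<in>I. \<forall>B\<in>I. A \<union> B \<in> I) \<and> (\<forall>A\<in>I. \<forall>B. B \<subseteq> A \<longrightarrow> B \<in> I)"

definition nontrivial_ideal :: "nat set set \<Rightarrow> bool" where
  "nontrivial_ideal I \<longleftrightarrow> UNIV \<notin> I"

definition admissible_ideal :: "nat set set \<Rightarrow> bool" where
  "admissible_ideal I \<longleftrightarrow> (\<forall>n. {n} \<in> I)"

text \<open>r-I-statistical convergence; sequence terms are x 1, x 2, ... (x 0 unused),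
and n ranges over positive naturals.\<close>
definition rI_st_conv :: "nat set set \<Rightarrow> real \<Rightarrow> (nat \<Rightarrow> 'a::real_normed_vector) \<Rightarrow> 'a \<Rightarrow> bool" where
  "rI_st_conv I r x \<xi> \<longleftrightarrow>
     (\<forall>\<epsilon>>0. \<forall>\<delta>>0.
        {n. n \<ge> 1 \<and> real (card {k \<in> {1..n}. norm (x k - \<xi>) \<ge> r + \<epsilon>}) / real n \<ge> \<delta>} \<in> I)"

definition I_st_LIM :: "nat set set \<Rightarrow> real \<Rightarrow> (nat \<Rightarrow> 'a::real_normed_vector) \<Rightarrow> 'a set" where
  "I_st_LIM I r x = {\<xi>. rI_st_conv I r x \<xi>}"

end

theory Submission
  imports Defs
begin

lemma key_norm:
  fixes a b c :: "'a::real_normed_vector"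
  assumes "u \<ge> 0" "v \<ge> 0" "u + v = 1" "norm (c - (u *\<^sub>R a + v *\<^sub>R b)) \<ge> s"
  shows "norm (c - a) \<ge> s \<or> norm (c - b) \<ge> s"
proof (rule ccontr)
  assume "\<not> ?thesis"
  hence h: "norm (c - a) < s" "norm (c - b) < s" by auto
  have eq: "c - (u *\<^sub>R a + v *\<^sub>R b) = u *\<^sub>R (c - a) + v *\<^sub>R (c - b)"
  proof -
    have "c = u *\<^sub>R c + v *\<^sub>R c" using assms(3) by (metis scaleR_add_left scaleR_one)
    thus ?thesis by (simp add: algebra_simps)
  qed
  have n1: "norm (u *\<^sub>R (c - a)) = u * norm (c - a)" using assms(1) by simp
  have n2: "norm (v *\<^sub>R (c - b)) = v * norm (c - b)" using assms(2) by simp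
  have tri: "norm (c - (u *\<^sub>R a + v *\<^sub>R b)) \<le> u * norm (c - a) + v * norm (c - b)"
    unfolding eq using norm_triangle_ineq[of "u *\<^sub>R (c - a)" "v *\<^sub>R (c - b)"] n1 n2 by linarith
  have "u * norm (c - a) + v * norm (c - b) < s"
  proof (cases "u > 0")
    case True
    have "u * norm (c - a) < u * s" using h True by simp
    moreover have "v * norm (c - b) \<le> v * s" using h assms by (intro mult_left_mono) auto
    ultimately have "u * norm (c - a) + v * norm (c - b) < u * s + v * s" by linarith
    also have "u * s + v * s = s" using assms(3) by (metis distrib_right mult_1)
    finally show ?thesis .
  next
    case False
    hence "v = 1" "u = 0" using assms by auto
    thus ?thesis using h by simp
  qed
  thus False using tri assms(4) by linarith
qed

theorem theorem3p4:
  fixes I :: "nat set set" and x :: "nat \<Rightarrow> 'a::real_normed_vector" and r :: real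
  assumes "nat_ideal I" and "nontrivial_ideal I" and "admissible_ideal I"
    and "r > 0"
  shows "convex (I_st_LIM I r x)"
proof (unfold convex_def, intro ballI allI impI)
  fix a b and u v :: real
  assume a: "a \<in> I_st_LIM I r x" and b: "b \<in> I_st_LIM I r x" and uv: "0 \<le> u" "0 \<le> v" "u + v = 1"
  show "u *\<^sub>R a + v *\<^sub>R b \<in> I_st_LIM I r x"
    unfolding I_st_LIM_def rI_st_conv_def mem_Collect_eq
  proof (intro allI impI)
    fix \<epsilon> \<delta> :: real assume e: "\<epsilon> > 0" and d: "\<delta> > 0"
    define S where "S = (\<lambda>\<xi> n. {k \<in> {1..n}. norm (x k - \<xi>) \<ge> r + \<epsilon>})"
    define d2 where "d2 = \<delta>/2"
    define A where "A = (\<lambda>\<xi>. {n. n \<ge> 1 \<and> real (card (S \<xi> n)) / real n \<ge> d2})"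
    have Aa: "A a \<in> I"
    proof -
      have "d2 > 0" using d by (simp add: d2_def)
      thus ?thesis using a e unfolding I_st_LIM_def rI_st_conv_def A_def S_def mem_Collect_eq d2_def by blast
    qed
    have Ab: "A b \<in> I"
    proof -
      have "d2 > 0" using d by (simp add: d2_def)
      thus ?thesis using b e unfolding I_st_LIM_def rI_st_conv_def A_def S_def mem_Collect_eq d2_def by blast
    qed
    have U: "A a \<union> A b \<in> I" using assms(1) Aa Ab unfolding nat_ideal_def by blast
    have sub: "{n. n \<ge> 1 \<and> real (card (S (u *\<^sub>R a + v *\<^sub>R b) n)) / real n \<ge> \<delta>} \<subseteq> A a \<union> A b"
    proof
      fix n assume "n \<in> {n. n \<ge> 1 \<and> real (card (S (u *\<^sub>R a + v *\<^sub>R b) n)) / real n \<ge> \<delta>}"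
      hence n: "n \<ge> 1" "real (card (S (u *\<^sub>R a + v *\<^sub>R b) n)) / real n \<ge> \<delta>" by auto
      have "S (u *\<^sub>R a + v *\<^sub>R b) n \<subseteq> S a n \<union> S b n"
        unfolding S_def using key_norm[OF uv] by blast
      hence "card (S (u *\<^sub>R a + v *\<^sub>R b) n) \<le> card (S a n \<union> S b n)"
        by (intro card_mono) (auto simp: S_def)
      also have "\<dots> \<le> card (S a n) + card (S b n)" by (rule card_Un_le)
      finally have c: "real (card (S (u *\<^sub>R a + v *\<^sub>R b) n)) \<le> real (card (S a n)) + real (card (S b n))"
        by linarith
      have np: "real n > 0" using n by simp
      have "real (card (S (u *\<^sub>R a + v *\<^sub>R b) n)) / real n \<le> real (card (S a n)) / real n + real (card (S b n)) / real n"
        using c np by (simp add: divide_right_mono flip: add_divide_distrib)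
      hence "real (card (S a n)) / real n \<ge> d2 \<or> real (card (S b n)) / real n \<ge> d2"
        using n(2) unfolding d2_def by linarith
      thus "n \<in> A a \<union> A b" using n(1) unfolding A_def mem_Collect_eq Un_iff by blast
    qed
    have "{n. n \<ge> 1 \<and> real (card (S (u *\<^sub>R a + v *\<^sub>R b) n)) / real n \<ge> \<delta>} \<in> I"
      using assms(1) U sub unfolding nat_ideal_def by blast
    thus "{n. n \<ge> 1 \<and> real (card {k \<in> {1..n}. norm (x k - (u *\<^sub>R a + v *\<^sub>R b)) \<ge> r + \<epsilon>}) / real n \<ge> \<delta>} \<in> I"
      unfolding S_def .
  qed
qed

end
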